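(* Let $\mathcal{C}$ be a $\beta$-avoiding simplicial complex. Then its Alexander dual $\mathcal{C}^*$ is also $\beta$-avoiding.
   Context: A simplicial complex on a finite ground set $V$ is a family of subsets of $V$ closed under subsets; isomorphism means a bijection of ground sets carrying faces onto faces. The Alexander dual is $\mathcal{C}^*=\{S\subseteq V: V\setminus S\notin\mathcal{C}\}$. For $S\subseteq V$, $\mathcal{C}\setminus S$ is the induced subcomplex $\{F\in\mathcal{C}:F\cap S=\emptyset\}$ on $V\setminus S$; for a face $R$, $\operatorname{link}_R(\mathcal{C})=\{F\setminus R: R\subseteq F\in\mathcal{C}\}$ on $V\setminus R$. A minor of $\mathcal{C}$ is $\operatorname{link}_R(\mathcal{C}\setminus S)$ with $S\cap R=\emptyset$ and $R$ a face of $\mathcal{C}$. $\mathcal{C}$ is $\beta$-avoiding if no minor is isomorphic to any of: $P_4$ (on $\{1,2,3,4\}$, facets $12,23,34$); $O_6$ (on $\{1,\dots,6\}$, faces the subsets containing none of $\{1,2\},\{3,4\},\{5,6\}$) or $O_6^*$; $J_1$ (on $\{1,\dots,5\}$, facets $12,15,234,345$) or $J_1^*$ (facets $134,235,245$); $J_2$ (on $\{1,\dots,5\}$, facets $12,235,34,145$); $\partial\Delta_n\sqcup\{v\}$ for $n\ge1$ (all proper subsets of an $(n+1)$-set, together with one extra isolated vertex $v$). *)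

theory Defs
  imports Main
begin

definition simplicial_complex :: "'a set \<Rightarrow> 'a set set \<Rightarrow> bool" where
  "simplicial_complex V C \<longleftrightarrow> finite V \<and> (\<forall>F\<in>C. F \<subseteq> V) \<and>
     (\<forall>F\<in>C. \<forall>G. G \<subseteq> F \<longrightarrow> G \<in> C)"

definition cx_iso :: "'a set \<Rightarrow> 'a set set \<Rightarrow> 'b set \<Rightarrow> 'b set set \<Rightarrow> bool" where
  "cx_iso V C W D \<longleftrightarrow> (\<exists>f. bij_betw f V W \<and> (\<forall>F. F \<subseteq> V \<longrightarrow> (F \<in> C \<longleftrightarrow> f ` F \<in> D)))"

definition alex_dual :: "'a set \<Rightarrow> 'a set set \<Rightarrow> 'a set set" where
  "alex_dual V C = {S. S \<subseteq> V \<and> V - S \<notin> C}"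

text \<open>Induced subcomplex C \ S (on ground set V - S) and link (on ground set V - R).\<close>
definition del_faces :: "'a set set \<Rightarrow> 'a set \<Rightarrow> 'a set set" where
  "del_faces C S = {F \<in> C. F \<inter> S = {}}"

definition link_faces :: "'a set set \<Rightarrow> 'a set \<Rightarrow> 'a set set" where
  "link_faces C R = {F - R | F. F \<in> C \<and> R \<subseteq> F}"

text \<open>Faces of the minor link_R(C \ S); its ground set is V - S - R.\<close>
definition minor_faces :: "'a set set \<Rightarrow> 'a set \<Rightarrow> 'a set \<Rightarrow> 'a set set" where
  "minor_faces C S R = link_faces (del_faces C S) R"

definition gen_cx :: "nat set \<Rightarrow> nat set set \<Rightarrow> nat set set" where
  "gen_cx V Fs = {F. F \<subseteq> V \<and> (\<exists>G\<in>Fs. F \<subseteq> G)}"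

definition P4 :: "nat set set" where
  "P4 = gen_cx {1..4} {{1,2},{2,3},{3,4}}"

definition O6 :: "nat set set" where
  "O6 = {F. F \<subseteq> {1..6} \<and> \<not> {1,2} \<subseteq> F \<and> \<not> {3,4} \<subseteq> F \<and> \<not> {5,6} \<subseteq> F}"

definition O6_dual :: "nat set set" where
  "O6_dual = alex_dual {1..6} O6"

definition J1 :: "nat set set" where
  "J1 = gen_cx {1..5} {{1,2},{1,5},{2,3,4},{3,4,5}}"

definition J1_dual :: "nat set set" where
  "J1_dual = gen_cx {1..5} {{1,3,4},{2,3,5},{2,4,5}}"

definition J2 :: "nat set set" where
  "J2 = gen_cx {1..5} {{1,2},{2,3,5},{3,4},{1,4,5}}"

definition bdry_plus_pt :: "nat \<Rightarrow> nat set set" where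
  "bdry_plus_pt n = {F. F \<subset> {0..n}} \<union> {{n+1}}"

definition is_forbidden :: "'a set \<Rightarrow> 'a set set \<Rightarrow> bool" where
  "is_forbidden W D \<longleftrightarrow>
     cx_iso W D {1..4} P4 \<or> cx_iso W D {1..6} O6 \<or> cx_iso W D {1..6} O6_dual \<or>
     cx_iso W D {1..5} J1 \<or> cx_iso W D {1..5} J1_dual \<or> cx_iso W D {1..5} J2 \<or>
     (\<exists>n\<ge>1. cx_iso W D {0..n+1} (bdry_plus_pt n))"

definition beta_avoiding :: "'a set \<Rightarrow> 'a set set \<Rightarrow> bool" where
  "beta_avoiding V C \<longleftrightarrow>
     (\<forall>S R. S \<subseteq> V \<and> R \<in> C \<and> S \<inter> R = {} \<longrightarrow>
        \<not> is_forbidden (V - S - R) (minor_faces C S R))"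

end

theory Submission imports Defs begin
lemma five: "{1..5::nat} = {1,2,3,4,5}" by auto
lemma four: "{1..4::nat} = {1,2,3,4}" by auto
lemma six: "{1..6::nat} = {1,2,3,4,5,6}" by auto

lemma iso_check:
  assumes "bij_betw f X X" "\<forall>F\<in>Pow X. (F \<in> A) = (f ` F \<in> B)"
  shows "cx_iso X A X B"
  using assms unfolding cx_iso_def by blast

lemma iso_refl: "cx_iso X A X A"
  unfolding cx_iso_def by (rule exI[of _ id]) auto

lemma iso_trans:
  assumes "cx_iso W D X E" "cx_iso X E Y G"
  shows "cx_iso W D Y G"
proof -
  obtain f where f: "bij_betw f W X" "\<forall>F. F \<subseteq> W \<longrightarrow> (F \<in> D \<longleftrightarrow> f ` F \<in> E)"
    using assms(1) unfolding cx_iso_def by blast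
  obtain g where g: "bij_betw g X Y" "\<forall>F. F \<subseteq> X \<longrightarrow> (F \<in> E \<longleftrightarrow> g ` F \<in> G)"
    using assms(2) unfolding cx_iso_def by blast
  have "bij_betw (g \<circ> f) W Y" using f(1) g(1) by (rule bij_betw_trans)
  moreover have "\<forall>F. F \<subseteq> W \<longrightarrow> (F \<in> D \<longleftrightarrow> (g \<circ> f) ` F \<in> G)"
  proof (intro allI impI)
    fix F assume F: "F \<subseteq> W"
    have "f ` F \<subseteq> X" using F f(1) bij_betw_imp_surj_on by blast
    then show "F \<in> D \<longleftrightarrow> (g \<circ> f) ` F \<in> G" using f(2) g(2) F by (simp add: image_comp)
  qed
  ultimately show ?thesis unfolding cx_iso_def by blast
qed

lemma dual_iso:
  assumes "cx_iso W D X E"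
  shows "cx_iso W (alex_dual W D) X (alex_dual X E)"
proof -
  obtain f where f: "bij_betw f W X" "\<forall>F. F \<subseteq> W \<longrightarrow> (F \<in> D \<longleftrightarrow> f ` F \<in> E)"
    using assms unfolding cx_iso_def by blast
  have "\<forall>F. F \<subseteq> W \<longrightarrow> (F \<in> alex_dual W D \<longleftrightarrow> f ` F \<in> alex_dual X E)"
  proof (intro allI impI)
    fix F assume F: "F \<subseteq> W"
    have inj: "inj_on f W" and im: "f ` W = X" using f(1) by (auto simp: bij_betw_def)
    have "f ` (W - F) = X - f ` F" using inj im F by (metis Diff_subset inj_on_image_set_diff)
    moreover have "f ` F \<subseteq> X" using F im by blast
    ultimately show "F \<in> alex_dual W D \<longleftrightarrow> f ` F \<in> alex_dual X E"
    proof -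
      have "(W - F \<in> D) = (f ` (W - F) \<in> E)" using f(2) by blast
      then show ?thesis unfolding alex_dual_def using F \<open>f ` F \<subseteq> X\<close> \<open>f ` (W - F) = X - f ` F\<close> by simp
    qed
  qed
  then show ?thesis using f(1) unfolding cx_iso_def by blast
qed

lemma double_dual: "D \<subseteq> Pow W \<Longrightarrow> alex_dual W (alex_dual W D) = D"
  unfolding alex_dual_def by (auto simp: double_diff)

lemma J1d: "alex_dual {1..5} J1 = J1_dual"
proof -
  have "\<forall>F\<in>Pow {1,2,3,4,5::nat}. (F \<in> alex_dual {1,2,3,4,5} J1) = (F \<in> J1_dual)"
    unfolding alex_dual_def J1_def J1_dual_def gen_cx_def five
    by (simp add: Pow_insert insert_Diff_if)
  then show ?thesis unfolding five alex_dual_def J1_dual_def gen_cx_def by blast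
qed

lemma J1dd: "alex_dual {1..5} J1_dual = J1"
proof -
  have "J1 \<subseteq> Pow {1..5}" unfolding J1_def gen_cx_def by blast
  then have "alex_dual {1..5} (alex_dual {1..5} J1) = J1" by (rule double_dual)
  then show ?thesis unfolding J1d .
qed

lemma O6dd: "alex_dual {1..6} O6_dual = O6"
proof -
  have "O6 \<subseteq> Pow {1..6}" unfolding O6_def by blast
  then show ?thesis unfolding O6_dual_def by (rule double_dual)
qed

lemma bdry_d: "alex_dual {0..n+1} (bdry_plus_pt n) = bdry_plus_pt n"
proof (rule set_eqI)
  fix S
  let ?X = "{0..n+1}" and ?A = "{0..n}"
  have XA: "?X = insert (n+1) ?A" by auto
  show "S \<in> alex_dual ?X (bdry_plus_pt n) \<longleftrightarrow> S \<in> bdry_plus_pt n"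
  proof (cases "n+1 \<in> S")
    case True
    have "S \<in> alex_dual ?X (bdry_plus_pt n) \<longleftrightarrow> S \<subseteq> ?X \<and> \<not> (?X - S \<subset> ?A) \<and> ?X - S \<noteq> {n+1}"
      unfolding alex_dual_def bdry_plus_pt_def by (simp only: mem_Collect_eq Un_iff singleton_iff) blast
    also have "\<dots> \<longleftrightarrow> S = {n+1}"
    proof
      assume h: "S \<subseteq> ?X \<and> \<not> (?X - S \<subset> ?A) \<and> ?X - S \<noteq> {n+1}"
      have "?X - S \<subseteq> ?A" using True le_Suc_eq by auto
      then have "?X - S = ?A" using h by blast
      then show "S = {n+1}" using h True XA by auto
    next
      assume "S = {n+1}"
      then show "S \<subseteq> ?X \<and> \<not> (?X - S \<subset> ?A) \<and> ?X - S \<noteq> {n+1}" using XA by auto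
    qed
    also have "\<dots> \<longleftrightarrow> S \<in> bdry_plus_pt n"
      unfolding bdry_plus_pt_def using True by auto
    finally show ?thesis .
  next
    case False
    have "S \<in> alex_dual ?X (bdry_plus_pt n) \<longleftrightarrow> S \<subseteq> ?X \<and> \<not> (?X - S \<subset> ?A) \<and> ?X - S \<noteq> {n+1}"
      unfolding alex_dual_def bdry_plus_pt_def by (simp only: mem_Collect_eq Un_iff singleton_iff) blast
    also have "\<dots> \<longleftrightarrow> S \<subset> ?A"
    proof
      assume h: "S \<subseteq> ?X \<and> \<not> (?X - S \<subset> ?A) \<and> ?X - S \<noteq> {n+1}"
      have "S \<subseteq> ?A" using h False le_Suc_eq by auto
      moreover have "S \<noteq> ?A"
      proof
        assume "S = ?A"
        then have "?X - S = {n+1}" by auto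
        then show False using h by blast
      qed
      ultimately show "S \<subset> ?A" by blast
    next
      assume h: "S \<subset> ?A"
      have "n+1 \<in> ?X - S" using False by simp
      moreover have "n+1 \<notin> ?A" by simp
      moreover have "?X - S \<noteq> {n+1}"
      proof -
        obtain a where a: "a \<in> ?A" "a \<notin> S" using h by blast
        then have "a \<in> ?X - S" "a \<noteq> n+1" by auto
        then show ?thesis by blast
      qed
      moreover have "S \<subseteq> ?X" using h by auto
      ultimately show "S \<subseteq> ?X \<and> \<not> (?X - S \<subset> ?A) \<and> ?X - S \<noteq> {n+1}" by blast
    qed
    also have "\<dots> \<longleftrightarrow> S \<in> bdry_plus_pt n"
      unfolding bdry_plus_pt_def using False by auto
    finally show ?thesis .
  qed
qed

lemma gen_iso:
  assumes f: "bij_betw f X X" and Fs: "Fs \<subseteq> Pow X"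
  shows "cx_iso X (gen_cx X Fs) X (gen_cx X ((`) f ` Fs))"
proof -
  have inj: "inj_on f X" and im: "f ` X = X" using f by (auto simp: bij_betw_def)
  have "\<forall>F. F \<subseteq> X \<longrightarrow> (F \<in> gen_cx X Fs \<longleftrightarrow> f ` F \<in> gen_cx X ((`) f ` Fs))"
  proof (intro allI impI)
    fix F assume F: "F \<subseteq> X"
    have "f ` F \<subseteq> X" using F im by blast
    moreover have "\<And>G. G \<in> Fs \<Longrightarrow> (f ` F \<subseteq> f ` G) = (F \<subseteq> G)"
    proof -
      fix G assume G: "G \<in> Fs"
      then have GX: "G \<subseteq> X" using Fs by blast
      show "(f ` F \<subseteq> f ` G) = (F \<subseteq> G)"
      proof
        assume h: "f ` F \<subseteq> f ` G"
        show "F \<subseteq> G"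
        proof
          fix x assume "x \<in> F"
          then have "f x \<in> f ` G" "x \<in> X" using h F by auto
          then show "x \<in> G" using inj_on_image_mem_iff[OF inj _ GX] by blast
        qed
      qed (rule image_mono)
    qed
    ultimately show "F \<in> gen_cx X Fs \<longleftrightarrow> f ` F \<in> gen_cx X ((`) f ` Fs)"
      unfolding gen_cx_def using F by auto
  qed
  then show ?thesis using f unfolding cx_iso_def by blast
qed

lemma P4d: "cx_iso {1..4} (alex_dual {1..4} P4) {1..4} P4"
proof -
  have e: "alex_dual {1..4} P4 = gen_cx {1..4} {{1,3},{2,3},{2,4}}"
  proof -
    have "\<forall>F\<in>Pow {1,2,3,4::nat}. (F \<in> alex_dual {1,2,3,4} P4) = (F \<in> gen_cx {1,2,3,4} {{1,3},{2,3},{2,4}})"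
      unfolding alex_dual_def P4_def gen_cx_def four
      by (simp add: Pow_insert insert_Diff_if)
    then show ?thesis unfolding four alex_dual_def gen_cx_def by blast
  qed
  have b: "bij_betw (id(2:=3,3:=2)) {1..4::nat} {1..4}"
    unfolding bij_betw_def inj_on_def four by auto
  have i: "(`) (id(2:=3,3:=2)) ` {{1,3},{2,3},{2,4}} = {{1::nat,2},{2,3},{3,4}}"
    by auto
  have p: "{{1::nat,3},{2,3},{2,4}} \<subseteq> Pow {1..4}" by (auto simp: four)
  have "cx_iso {1..4} (gen_cx {1..4} {{1,3},{2,3},{2,4}}) {1..4} (gen_cx {1..4} {{1::nat,2},{2,3},{3,4}})"
    using gen_iso[OF b p] unfolding i .
  then show ?thesis by (subst e) (unfold P4_def)
qed

lemma J2d: "cx_iso {1..5} (alex_dual {1..5} J2) {1..5} J2"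
proof -
  have e: "alex_dual {1..5} J2 = gen_cx {1..5} {{1,2},{2,4,5},{3,4},{1,3,5}}"
  proof -
    have "\<forall>F\<in>Pow {1,2,3,4,5::nat}. (F \<in> alex_dual {1,2,3,4,5} J2) = (F \<in> gen_cx {1,2,3,4,5} {{1,2},{2,4,5},{3,4},{1,3,5}})"
      unfolding alex_dual_def J2_def gen_cx_def five
      by (simp add: Pow_insert insert_Diff_if)
    then show ?thesis unfolding five alex_dual_def gen_cx_def by blast
  qed
  have b: "bij_betw (id(4:=3,3:=4)) {1..5::nat} {1..5}"
    unfolding bij_betw_def inj_on_def five by auto
  have i: "(`) (id(4:=3,3:=4)) ` {{1,2},{2,4,5},{3,4},{1,3,5}} = {{1::nat,2},{2,3,5},{3,4},{1,4,5}}"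
    by auto
  have p: "{{1::nat,2},{2,4,5},{3,4},{1,3,5}} \<subseteq> Pow {1..5}" by (auto simp: five)
  have "cx_iso {1..5} (gen_cx {1..5} {{1,2},{2,4,5},{3,4},{1,3,5}}) {1..5} (gen_cx {1..5} {{1::nat,2},{2,3,5},{3,4},{1,4,5}})"
    using gen_iso[OF b p] unfolding i .
  then show ?thesis by (subst e) (unfold J2_def)
qed

lemma iso_full: "cx_iso W (Pow W) X E \<Longrightarrow> X \<in> E"
  unfolding cx_iso_def bij_betw_def by blast

lemma full_not: "\<not> is_forbidden W (Pow W)"
proof
  assume "is_forbidden W (Pow W)"
  then show False unfolding is_forbidden_def
  proof (elim disjE exE conjE)
    assume "cx_iso W (Pow W) {1..4} P4" then have "{1..4} \<in> P4" by (rule iso_full)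
    then show False unfolding P4_def gen_cx_def four by auto
  next
    assume "cx_iso W (Pow W) {1..6} O6" then have "{1..6} \<in> O6" by (rule iso_full)
    then show False unfolding O6_def by auto
  next
    assume "cx_iso W (Pow W) {1..6} O6_dual" then have "{1..6} \<in> O6_dual" by (rule iso_full)
    then show False unfolding O6_dual_def alex_dual_def O6_def by auto
  next
    assume "cx_iso W (Pow W) {1..5} J1" then have "{1..5} \<in> J1" by (rule iso_full)
    then show False unfolding J1_def gen_cx_def five by auto
  next
    assume "cx_iso W (Pow W) {1..5} J1_dual" then have "{1..5} \<in> J1_dual" by (rule iso_full)
    then show False unfolding J1_dual_def gen_cx_def five by auto
  next
    assume "cx_iso W (Pow W) {1..5} J2" then have "{1..5} \<in> J2" by (rule iso_full)
    then show False unfolding J2_def gen_cx_def five by auto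
  next
    fix n :: nat assume "cx_iso W (Pow W) {0..n+1} (bdry_plus_pt n)"
    then have "{0..n+1} \<in> bdry_plus_pt n" by (rule iso_full)
    moreover have "n+1 \<in> {0..n+1}" "n+1 \<notin> {0..n}" "0 \<in> {0..n+1}" by auto
    ultimately have "{0..n+1} \<subset> {0..n} \<or> {0..n+1} = {n+1}"
      by (simp only: bdry_plus_pt_def mem_Collect_eq Un_iff singleton_iff)
    then show False
    proof
      assume "{0..n+1} \<subset> {0..n}"
      then show False using \<open>n+1 \<in> {0..n+1}\<close> \<open>n+1 \<notin> {0..n}\<close> by blast
    next
      assume "{0..n+1} = {n+1}"
      then show False using \<open>0 \<in> {0..n+1}\<close> by auto
    qed
  qed
qed

lemma dual_step:
  assumes D: "D \<subseteq> Pow W" and h: "cx_iso W (alex_dual W D) X E"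
    and e: "cx_iso X (alex_dual X E) X E2"
  shows "cx_iso W D X E2"
proof -
  have "cx_iso W (alex_dual W (alex_dual W D)) X (alex_dual X E)" by (rule dual_iso[OF h])
  then have "cx_iso W D X (alex_dual X E)" using double_dual[OF D] by simp
  then show ?thesis using e by (rule iso_trans)
qed

lemma forb_dual:
  assumes D: "D \<subseteq> Pow W" and h: "is_forbidden W (alex_dual W D)"
  shows "is_forbidden W D"
  using h[unfolded is_forbidden_def]
proof (elim disjE exE conjE)
  assume "cx_iso W (alex_dual W D) {1..4} P4"
  then show ?thesis unfolding is_forbidden_def using dual_step[OF D _ P4d] by blast
next
  assume a: "cx_iso W (alex_dual W D) {1..6} O6"
  have "cx_iso {1..6} (alex_dual {1..6} O6) {1..6} O6_dual" unfolding O6_dual_def by (rule iso_refl)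
  then show ?thesis unfolding is_forbidden_def using dual_step[OF D a] by blast
next
  assume a: "cx_iso W (alex_dual W D) {1..6} O6_dual"
  have "cx_iso {1..6} (alex_dual {1..6} O6_dual) {1..6} O6" unfolding O6dd by (rule iso_refl)
  then show ?thesis unfolding is_forbidden_def using dual_step[OF D a] by blast
next
  assume a: "cx_iso W (alex_dual W D) {1..5} J1"
  have "cx_iso {1..5} (alex_dual {1..5} J1) {1..5} J1_dual" unfolding J1d by (rule iso_refl)
  then show ?thesis unfolding is_forbidden_def using dual_step[OF D a] by blast
next
  assume a: "cx_iso W (alex_dual W D) {1..5} J1_dual"
  have "cx_iso {1..5} (alex_dual {1..5} J1_dual) {1..5} J1" unfolding J1dd by (rule iso_refl)
  then show ?thesis unfolding is_forbidden_def using dual_step[OF D a] by blast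
next
  assume "cx_iso W (alex_dual W D) {1..5} J2"
  then show ?thesis unfolding is_forbidden_def using dual_step[OF D _ J2d] by blast
next
  fix n :: nat assume n: "1 \<le> n" and a: "cx_iso W (alex_dual W D) {0..n+1} (bdry_plus_pt n)"
  have "cx_iso {0..n+1} (alex_dual {0..n+1} (bdry_plus_pt n)) {0..n+1} (bdry_plus_pt n)"
    unfolding bdry_d by (rule iso_refl)
  then show ?thesis unfolding is_forbidden_def using dual_step[OF D a] n by blast
qed

theorem proposition4p3:
  fixes V :: "'a set" and C :: "'a set set"
  assumes "simplicial_complex V C" and "beta_avoiding V C"
  shows "beta_avoiding V (alex_dual V C)"
  unfolding beta_avoiding_def
proof (intro allI impI notI, elim conjE)
  fix S R
  assume SV: "S \<subseteq> V" and R: "R \<in> alex_dual V C" and SR: "S \<inter> R = {}"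
    and forb: "is_forbidden (V - S - R) (minor_faces (alex_dual V C) S R)"
  have sub: "\<forall>F\<in>C. F \<subseteq> V" and cl: "\<forall>F\<in>C. \<forall>G. G \<subseteq> F \<longrightarrow> G \<in> C"
    using assms(1) unfolding simplicial_complex_def by auto
  have RV: "R \<subseteq> V" using R unfolding alex_dual_def by blast
  define W where "W = V - S - R"
  have forbW: "is_forbidden W (minor_faces (alex_dual V C) S R)" using forb unfolding W_def .
  have memD: "G \<in> minor_faces (alex_dual V C) S R \<longleftrightarrow> G \<subseteq> W \<and> (W - G) \<union> S \<notin> C" for G
  proof
    assume "G \<in> minor_faces (alex_dual V C) S R"
    then obtain F where F: "G = F - R" "F \<subseteq> V" "V - F \<notin> C" "F \<inter> S = {}" "R \<subseteq> F"
      unfolding minor_faces_def link_faces_def del_faces_def alex_dual_def by blast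
    have "(W - G) \<union> S = V - F" using F SV unfolding W_def by blast
    then show "G \<subseteq> W \<and> (W - G) \<union> S \<notin> C" using F unfolding W_def by auto
  next
    assume h: "G \<subseteq> W \<and> (W - G) \<union> S \<notin> C"
    have e: "V - (G \<union> R) = (W - G) \<union> S" using h SV SR RV unfolding W_def by blast
    have "G \<union> R \<in> alex_dual V C" using h RV e unfolding alex_dual_def W_def by auto
    moreover have "(G \<union> R) \<inter> S = {}" using h SR unfolding W_def by blast
    moreover have "G = (G \<union> R) - R" using h unfolding W_def by blast
    ultimately show "G \<in> minor_faces (alex_dual V C) S R"
      unfolding minor_faces_def link_faces_def del_faces_def by blast
  qed
  show False
  proof (cases "S \<in> C")
    case False
    have "minor_faces (alex_dual V C) S R = Pow W"
    proof (rule set_eqI)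
      fix G
      have "(W - G) \<union> S \<notin> C" using False cl by blast
      then show "G \<in> minor_faces (alex_dual V C) S R \<longleftrightarrow> G \<in> Pow W" using memD by auto
    qed
    then show False using forbW full_not[of W] by simp
  next
    case True
    have memC: "H \<in> minor_faces C R S \<longleftrightarrow> H \<subseteq> W \<and> H \<union> S \<in> C" for H
    proof
      assume "H \<in> minor_faces C R S"
      then obtain F where F: "H = F - S" "F \<in> C" "F \<inter> R = {}" "S \<subseteq> F"
        unfolding minor_faces_def link_faces_def del_faces_def by blast
      have "F \<subseteq> V" using F sub by blast
      then have "H \<union> S = F" "H \<subseteq> W" using F unfolding W_def by blast+
      then show "H \<subseteq> W \<and> H \<union> S \<in> C" using F by simp
    next
      assume h: "H \<subseteq> W \<and> H \<union> S \<in> C"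
      have "(H \<union> S) \<inter> R = {}" using h SR unfolding W_def by blast
      moreover have "H = (H \<union> S) - S" using h unfolding W_def by blast
      ultimately show "H \<in> minor_faces C R S"
        using h unfolding minor_faces_def link_faces_def del_faces_def by blast
    qed
    have eq: "minor_faces (alex_dual V C) S R = alex_dual W (minor_faces C R S)"
    proof (rule set_eqI)
      fix G
      show "G \<in> minor_faces (alex_dual V C) S R \<longleftrightarrow> G \<in> alex_dual W (minor_faces C R S)"
      proof -
        have "G \<in> alex_dual W (minor_faces C R S) \<longleftrightarrow> G \<subseteq> W \<and> W - G \<notin> minor_faces C R S"
          by (simp add: alex_dual_def)
        then show ?thesis using memD[of G] memC[of "W - G"] by auto
      qed
    qed
    have Dsub: "minor_faces C R S \<subseteq> Pow W" using memC by blast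
    have "is_forbidden W (minor_faces C R S)"
      using forb_dual[OF Dsub] forbW eq by simp
    moreover have "\<not> is_forbidden (V - R - S) (minor_faces C R S)"
      using assms(2) RV True SR unfolding beta_avoiding_def by blast
    moreover have "V - R - S = W" unfolding W_def by blast
    ultimately show False by simp
  qed
qed

end
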